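(* Let $(\Omega,\mu)$ be a measure space, $E\subset\Omega$ with $0<\mu E<\infty$, and let $(v_k)_{k\ge1}$ be a sequence in $L^2_{\mathbb R}(\Omega,\mu)$ such that $\sum_{k\ge1}|v_k(x)|^2\le M^2$ for all $x\in E$, for some constant $M$. Then (1) the map $V:f\mapsto((f,v_k))_{k\ge1}$ is a compact operator from $L^2(E,\mu)$ to $\ell^2$, and (2) the map $V^*:(c_k)_{k\ge1}\mapsto\sum_{k\ge1}c_kv_k|_E$ is a compact operator from $\ell^2$ to $L^2(E,\mu)$.
   Context: Functions in $L^2(E,\mu)$ are regarded as functions on $\Omega$ vanishing outside $E$, and $(f,g)=\int fg\,d\mu$. *)

theory Defs
  imports "HOL-Analysis.Analysis"
begin

definition L2 :: "'a measure \<Rightarrow> ('a \<Rightarrow> real) set" where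
  "L2 M = {f \<in> borel_measurable M. integrable M (\<lambda>x. (f x)\<^sup>2)}"

text \<open>L^2(E, mu), regarded as functions on Omega vanishing outside E.\<close>
definition L2_on :: "'a measure \<Rightarrow> 'a set \<Rightarrow> ('a \<Rightarrow> real) set" where
  "L2_on M E = {f \<in> L2 M. \<forall>x \<in> space M - E. f x = 0}"

definition L2_norm :: "'a measure \<Rightarrow> ('a \<Rightarrow> real) \<Rightarrow> real" where
  "L2_norm M f = sqrt (\<integral>x. (f x)\<^sup>2 \<partial>M)"

definition L2_inner :: "'a measure \<Rightarrow> ('a \<Rightarrow> real) \<Rightarrow> ('a \<Rightarrow> real) \<Rightarrow> real" where
  "L2_inner M f g = (\<integral>x. f x * g x \<partial>M)"

text \<open>Real l^2 (sequences indexed by nat; index 0 plays the role of index 1).\<close>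
definition l2 :: "(nat \<Rightarrow> real) set" where
  "l2 = {c. summable (\<lambda>k. (c k)\<^sup>2)}"

definition l2_norm :: "(nat \<Rightarrow> real) \<Rightarrow> real" where
  "l2_norm c = sqrt (\<Sum>k. (c k)\<^sup>2)"

text \<open>Compact (linear) operator T from the normed function space (X, nX) to (Y, nY):
  T maps X into Y, is linear, and maps bounded sequences to sequences having a
  subsequence converging in Y (i.e. images of bounded sets are relatively compact).\<close>
definition compact_operator ::
  "('p \<Rightarrow> real) set \<Rightarrow> (('p \<Rightarrow> real) \<Rightarrow> real) \<Rightarrow> ('q \<Rightarrow> real) set \<Rightarrow> (('q \<Rightarrow> real) \<Rightarrow> real)
   \<Rightarrow> (('p \<Rightarrow> real) \<Rightarrow> ('q \<Rightarrow> real)) \<Rightarrow> bool" where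
  "compact_operator X nX Y nY T \<longleftrightarrow>
     (\<forall>f\<in>X. T f \<in> Y) \<and>
     (\<forall>f\<in>X. \<forall>g\<in>X. \<forall>a b::real. T (\<lambda>x. a * f x + b * g x) = (\<lambda>y. a * T f y + b * T g y)) \<and>
     (\<forall>(s::nat \<Rightarrow> 'p \<Rightarrow> real) B. (\<forall>n. s n \<in> X \<and> nX (s n) \<le> B) \<longrightarrow>
        (\<exists>r h. strict_mono r \<and> h \<in> Y \<and> (\<lambda>n. nY (\<lambda>y. T (s (r n)) y - h y)) \<longlonglongrightarrow> 0))"

end

theory Submission
  imports Defs "HOL-Library.Diagonal_Subsequence"
begin


lemma quad_disc:
  fixes A C G :: real
  assumes q: "\<And>t. 0 \<le> A - 2*t*C + t^2*G" and G: "0 \<le> G"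
  shows "C^2 \<le> A*G"
proof (cases "G = 0")
  case True
  have "C = 0"
  proof (rule ccontr)
    assume "C \<noteq> 0"
    have "0 \<le> A - 2*((A+1)/(2*C))*C + ((A+1)/(2*C))^2*G" by (rule q)
    with True \<open>C \<noteq> 0\<close> show False by simp
  qed
  then show ?thesis using True by simp
next
  case False
  then have Gp: "G > 0" using G by simp
  have "0 \<le> A - 2*(C/G)*C + (C/G)^2*G" by (rule q)
  also have "\<dots> = A - C^2/G" using Gp by (simp add: power2_eq_square field_simps)
  finally have "C^2/G \<le> A" by simp
  then show ?thesis using Gp by (simp add: divide_le_eq mult.commute)
qed

lemma cs_suminf:
  fixes a b :: "nat \<Rightarrow> real"
  assumes a: "summable (\<lambda>k. (a k)^2)" and b: "summable (\<lambda>k. (b k)^2)"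
  shows "summable (\<lambda>k. a k * b k) \<and> (\<Sum>k. a k * b k)^2 \<le> (\<Sum>k. (a k)^2) * (\<Sum>k. (b k)^2)"
proof -
  have s2: "summable (\<lambda>k. ((a k)^2 + (b k)^2)/2)"
    using summable_add[OF a b] summable_divide by blast
  have nb: "norm (a k * b k) \<le> ((a k)^2 + (b k)^2)/2" for k
  proof -
    have "0 \<le> (\<bar>a k\<bar> - \<bar>b k\<bar>)^2" by simp
    then show ?thesis by (simp add: power2_eq_square abs_mult algebra_simps)
  qed
  have s: "summable (\<lambda>k. a k * b k)"
    by (rule summable_comparison_test[OF _ s2]) (use nb in auto)
  have lim: "(\<lambda>N. (\<Sum>k<N. a k * b k)^2) \<longlonglongrightarrow> (\<Sum>k. a k * b k)^2"
    by (intro tendsto_power summable_LIMSEQ s)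
  have bd: "(\<Sum>k<N. a k * b k)^2 \<le> (\<Sum>k. (a k)^2) * (\<Sum>k. (b k)^2)" for N
  proof -
    have "(\<Sum>k<N. a k * b k)^2 \<le> (\<Sum>k<N. (a k)^2) * (\<Sum>k<N. (b k)^2)"
      by (rule Cauchy_Schwarz_ineq_sum)
    also have "\<dots> \<le> (\<Sum>k. (a k)^2) * (\<Sum>k. (b k)^2)"
      by (intro mult_mono sum_le_suminf a b) (auto intro: sum_nonneg suminf_nonneg a b)
    finally show ?thesis .
  qed
  show ?thesis using s LIMSEQ_le_const2[OF lim] bd by blast
qed

lemma diag_subseq:
  fixes a :: "nat \<Rightarrow> nat \<Rightarrow> real" and b :: "nat \<Rightarrow> real"
  assumes bdd: "\<And>n k. \<bar>a n k\<bar> \<le> b k"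
  shows "\<exists>r d. strict_mono r \<and> (\<forall>k. (\<lambda>n. a (r n) k) \<longlonglongrightarrow> d k)"
proof -
  let ?P = "\<lambda>k. \<lambda>s. convergent (\<lambda>n. a (s n) k)"
  interpret nat: subseqs ?P
  proof (unfold convergent_def, unfold subseqs_def, auto)
    fix k :: nat and s :: "nat \<Rightarrow> nat" assume s: "strict_mono s"
    have "bounded {-b k..b k}"
      using bounded_closed_interval by auto
    moreover have "\<And>n. a (s n) k \<in> {-b k..b k}"
      using bdd by (simp add: abs_le_iff minus_le_iff)
    ultimately have "\<exists>l s'. strict_mono s' \<and> ((\<lambda>n. a (s n) k) \<circ> s') \<longlonglongrightarrow> l"
      using compact_Icc compact_imp_seq_compact seq_compactE by metis
    thus "\<exists>s'. strict_mono (s'::nat\<Rightarrow>nat) \<and> (\<exists>l. (\<lambda>n. a (s (s' n)) k) \<longlonglongrightarrow> l)"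
      by (auto simp: comp_def)
  qed
  define d where "d = nat.diagseq"
  have subseq: "strict_mono d"
    unfolding d_def using nat.subseq_diagseq by auto
  have cnv: "?P k d" for k
  proof -
    have Pn_seqseq: "?P k (nat.seqseq (Suc k))"
      by (rule nat.seqseq_holds)
    have 1: "(\<lambda>n. a ((nat.seqseq (Suc k) \<circ> (\<lambda>n. nat.fold_reduce (Suc k) n
      (Suc k + n))) n) k) = (\<lambda>n. a (nat.seqseq (Suc k) n) k) \<circ>
      (\<lambda>n. nat.fold_reduce (Suc k) n (Suc k + n))"
      by auto
    have 2: "?P k (d \<circ> ((+) (Suc k)))"
      unfolding d_def nat.diagseq_seqseq 1
      by (intro convergent_subseq_convergent Pn_seqseq nat.subseq_diagonal_rest)
    then obtain L where 3: "(\<lambda>na. a (d (na + Suc k)) k) \<longlonglongrightarrow> L"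
      by (auto simp: add.commute dest: convergentD)
    then have "(\<lambda>n. a (d n) k) \<longlonglongrightarrow> L"
      by (rule LIMSEQ_offset)
    then show ?thesis
      by (auto simp: convergent_def)
  qed
  show ?thesis
    by (rule exI[of _ d], rule exI[of _ "\<lambda>k. lim (\<lambda>n. a (d n) k)"])
       (use subseq cnv convergent_LIMSEQ_iff in auto)
qed



lemma abs_lt_of_sq: fixes x y :: real assumes "x^2 < y^2" "0 \<le> y" shows "\<bar>x\<bar> < y"
  using assms by (metis abs_ge_zero abs_of_nonneg power2_abs power_less_imp_less_base)

lemma weak_zero:
  fixes e :: "nat \<Rightarrow> nat \<Rightarrow> real" and u :: "nat \<Rightarrow> real"
  assumes es: "\<And>n. summable (\<lambda>k. (e n k)^2)" and eD: "\<And>n. (\<Sum>k. (e n k)^2) \<le> D"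
    and el: "\<And>k. (\<lambda>n. e n k) \<longlonglongrightarrow> 0" and us: "summable (\<lambda>k. (u k)^2)"
  shows "(\<lambda>n. \<Sum>k. e n k * u k) \<longlonglongrightarrow> 0"
proof (rule LIMSEQ_I)
  fix \<epsilon> :: real assume ep: "0 < \<epsilon>"
  have D0: "0 \<le> D" using eD[of 0] suminf_nonneg[OF es[of 0]] by (meson order_trans zero_le_power2)
  have "0 < \<epsilon>^2/(4*(D+1))" using ep D0 by simp
  from suminf_exist_split[OF this us] obtain K where
    K: "\<And>n. n \<ge> K \<Longrightarrow> norm (\<Sum>i. (u (i + n))^2) < \<epsilon>^2/(4*(D+1))" by blast
  define T where "T = (\<Sum>i. (u (i + K))^2)"
  have T: "T < \<epsilon>^2/(4*(D+1))" using K[of K] unfolding T_def by simp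
  have T0: "0 \<le> T" unfolding T_def by (intro suminf_nonneg) (use us summable_iff_shift[of "\<lambda>k. (u k)^2" K] in auto)
  have hl: "(\<lambda>n. \<Sum>k<K. e n k * u k) \<longlonglongrightarrow> 0"
    using tendsto_sum[of "{..<K}" "\<lambda>k n. e n k * u k" "\<lambda>k. 0" sequentially]
    by (simp add: el tendsto_mult_left_zero)
  from LIMSEQ_D[OF hl, of "\<epsilon>/2"] ep obtain no where
    no: "\<And>n. n \<ge> no \<Longrightarrow> \<bar>\<Sum>k<K. e n k * u k\<bar> < \<epsilon>/2" by auto
  show "\<exists>no. \<forall>n\<ge>no. norm ((\<Sum>k. e n k * u k) - 0) < \<epsilon>"
  proof (intro exI allI impI)
    fix n assume n: "n \<ge> no"
    have cs: "summable (\<lambda>k. e n k * u k)" using cs_suminf[OF es us] by blast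
    have split: "(\<Sum>k. e n k * u k) = (\<Sum>k. e n (k+K) * u (k+K)) + (\<Sum>k<K. e n k * u k)"
      by (rule suminf_split_initial_segment[OF cs])
    have es': "summable (\<lambda>k. (e n (k+K))^2)" using es[of n] by (simp add: summable_iff_shift[of "\<lambda>k. (e n k)^2"])
    have us': "summable (\<lambda>k. (u (k+K))^2)" using us by (simp add: summable_iff_shift[of "\<lambda>k. (u k)^2"])
    have tl: "(\<Sum>k. e n (k+K) * u (k+K))^2 \<le> (\<Sum>k. (e n (k+K))^2) * T"
      using cs_suminf[OF es' us'] unfolding T_def by blast
    have "(\<Sum>k. (e n (k+K))^2) = (\<Sum>k. (e n k)^2) - (\<Sum>k<K. (e n k)^2)"
      by (rule suminf_minus_initial_segment[OF es])
    also have "\<dots> \<le> D" using eD[of n] sum_nonneg[of "{..<K}" "\<lambda>k. (e n k)^2"] by simp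
    finally have eK: "(\<Sum>k. (e n (k+K))^2) \<le> D" .
    have "(\<Sum>k. e n (k+K) * u (k+K))^2 \<le> D * T"
      using tl eK T0 by (meson mult_right_mono order_trans)
    also have "\<dots> \<le> (D+1) * T" using T0 by (simp add: mult_right_mono)
    also have "\<dots> < (D+1) * (\<epsilon>^2/(4*(D+1)))" using T D0 by (intro mult_strict_left_mono) auto
    also have "\<dots> = (\<epsilon>/2)^2" using D0 by (simp add: power2_eq_square field_simps)
    finally have "\<bar>\<Sum>k. e n (k+K) * u (k+K)\<bar> < \<epsilon>/2" by (rule abs_lt_of_sq) (use ep in simp)
    then show "norm ((\<Sum>k. e n k * u k) - 0) < \<epsilon>"
      using no[OF n] split by simp
  qed
qed

lemma hilbert_cube:
  fixes a :: "nat \<Rightarrow> nat \<Rightarrow> real" and c :: "nat \<Rightarrow> real"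
  assumes cs: "summable c" and c0: "\<And>k. 0 \<le> c k" and ac: "\<And>n k. (a n k)^2 \<le> C * c k"
  shows "\<exists>r h. strict_mono r \<and> summable (\<lambda>k. (h k)^2) \<and>
           (\<lambda>n. sqrt (\<Sum>k. (a (r n) k - h k)^2)) \<longlonglongrightarrow> 0"
proof -
  have "\<And>n k. \<bar>a n k\<bar> \<le> sqrt (C * c k)"
    using ac real_sqrt_le_mono real_sqrt_abs by metis
  from diag_subseq[of a "\<lambda>k. sqrt (C * c k)", OF this] obtain r d where r: "strict_mono r"
    and d: "\<And>k. (\<lambda>n. a (r n) k) \<longlonglongrightarrow> d k" by blast
  have dc: "(d k)^2 \<le> C * c k" for k
    using LIMSEQ_le_const2[OF tendsto_power[OF d[of k], of 2], of "C * c k"] ac by blast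
  have ds: "summable (\<lambda>k. (d k)^2)"
    by (rule summable_comparison_test[of _ "\<lambda>k. C * c k"]) (use dc summable_mult[OF cs] in auto)
  have bnd: "norm ((a (r n) k - d k)^2) \<le> 4 * (C * c k)" for n k
  proof -
    have "(a (r n) k - d k)^2 \<le> 2*(a (r n) k)^2 + 2*(d k)^2"
      using zero_le_power2[of "a (r n) k + d k"] by (simp add: power2_eq_square algebra_simps)
    then show ?thesis using ac[of "r n" k] dc[of k] by simp
  qed
  have s4: "summable (\<lambda>k. 4 * (C * c k))" using summable_mult[OF summable_mult[OF cs, of C], of 4] .
  have T: "((\<lambda>n. \<Sum>k. (a (r n) k - d k)^2) \<longlongrightarrow> (\<Sum>k. (0::real))) sequentially"
    by (rule tannerys_theorem[of "\<lambda>k n. (a (r n) k - d k)^2" "\<lambda>k. 0" sequentially "\<lambda>k. 4 * (C * c k)", THEN conjunct2, THEN conjunct2])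
       (use d bnd s4 in \<open>auto intro!: always_eventually tendsto_eq_intros\<close>)
  have "(\<lambda>n. sqrt (\<Sum>k. (a (r n) k - d k)^2)) \<longlonglongrightarrow> sqrt 0"
    by (rule tendsto_real_sqrt) (use T in simp)
  then show ?thesis using r ds by auto
qed



lemma cs_integral:
  fixes f g :: "'a \<Rightarrow> real"
  assumes fm[measurable]: "f \<in> borel_measurable M" and gm[measurable]: "g \<in> borel_measurable M"
    and fi: "integrable M (\<lambda>x. (f x)^2)" and gi: "integrable M (\<lambda>x. (g x)^2)"
  shows "integrable M (\<lambda>x. f x * g x) \<and> (\<integral>x. f x * g x \<partial>M)^2 \<le> (\<integral>x. (f x)^2 \<partial>M) * (\<integral>x. (g x)^2 \<partial>M)"
proof -
  have fgi: "integrable M (\<lambda>x. f x * g x)"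
  proof (rule Bochner_Integration.integrable_bound[OF Bochner_Integration.integrable_add[OF fi gi]])
    show "(\<lambda>x. f x * g x) \<in> borel_measurable M" by measurable
    show "AE x in M. norm (f x * g x) \<le> norm ((f x)^2 + (g x)^2)"
    proof (intro AE_I2)
      fix x
      have "0 \<le> (\<bar>f x\<bar> - \<bar>g x\<bar>)^2" by simp
      then have "2 * (\<bar>f x\<bar> * \<bar>g x\<bar>) \<le> (f x)^2 + (g x)^2"
        by (simp add: power2_eq_square abs_mult algebra_simps)
      moreover have "0 \<le> \<bar>f x\<bar> * \<bar>g x\<bar>" by simp
      ultimately have "\<bar>f x\<bar> * \<bar>g x\<bar> \<le> (f x)^2 + (g x)^2" by linarith
      then show "norm (f x * g x) \<le> norm ((f x)^2 + (g x)^2)"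
        by (simp add: abs_mult)
    qed
  qed
  have q: "0 \<le> (\<integral>x. (f x)^2 \<partial>M) - 2*t*(\<integral>x. f x * g x \<partial>M) + t^2*(\<integral>x. (g x)^2 \<partial>M)" for t
  proof -
    have "0 \<le> (\<integral>x. (f x - t * g x)^2 \<partial>M)" by (rule integral_nonneg_AE) simp
    also have "(\<lambda>x. (f x - t * g x)^2) = (\<lambda>x. ((f x)^2 - (2*t) * (f x * g x)) + t^2 * (g x)^2)"
      by (simp add: power2_eq_square algebra_simps)
    also have "(\<integral>x. ((f x)^2 - (2*t) * (f x * g x)) + t^2 * (g x)^2 \<partial>M)
       = (\<integral>x. (f x)^2 \<partial>M) - 2*t*(\<integral>x. f x * g x \<partial>M) + t^2*(\<integral>x. (g x)^2 \<partial>M)"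
      using fi gi fgi by simp
    finally show ?thesis .
  qed
  have "0 \<le> (\<integral>x. (g x)^2 \<partial>M)" by (rule integral_nonneg_AE) simp
  from quad_disc[OF q this] fgi show ?thesis by (simp add: mult.commute)
qed



lemma indv_sq_int:
  assumes "E \<in> sets M" "v \<in> L2 M"
  shows "integrable M (\<lambda>x. (indicator E x * v x)^2)"
proof -
  have "(\<lambda>x. (indicator E x * v x)^2) = (\<lambda>x. indicator E x *\<^sub>R (v x)^2)"
    by (auto simp: fun_eq_iff split: split_indicator)
  then show ?thesis using integrable_mult_indicator[OF assms(1), of "\<lambda>x. (v x)^2"] assms(2)
    by (simp add: L2_def)
qed

lemma V_bound:
  assumes E[measurable]: "E \<in> sets M" and f: "f \<in> L2_on M E" and v: "v \<in> L2 M"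
  shows "integrable M (\<lambda>x. f x * v x) \<and>
    (L2_inner M f v)^2 \<le> (\<integral>x. (f x)^2 \<partial>M) * (\<integral>x. (indicator E x * v x)^2 \<partial>M)"
proof -
  have fm[measurable]: "f \<in> borel_measurable M" and fi: "integrable M (\<lambda>x. (f x)^2)"
    and f0: "\<And>x. x \<in> space M - E \<Longrightarrow> f x = 0" using f by (auto simp: L2_on_def L2_def)
  have vm[measurable]: "v \<in> borel_measurable M" using v by (auto simp: L2_def)
  have eq: "\<And>x. x \<in> space M \<Longrightarrow> f x * (indicator E x * v x) = f x * v x"
    using f0 by (case_tac "x \<in> E") auto
  have cs: "integrable M (\<lambda>x. f x * (indicator E x * v x)) \<and>
     (\<integral>x. f x * (indicator E x * v x) \<partial>M)^2 \<le> (\<integral>x. (f x)^2 \<partial>M) * (\<integral>x. (indicator E x * v x)^2 \<partial>M)"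
    by (rule cs_integral[OF fm _ fi indv_sq_int[OF E v]]) measurable
  have i1: "integrable M (\<lambda>x. f x * (indicator E x * v x)) = integrable M (\<lambda>x. f x * v x)"
    by (rule Bochner_Integration.integrable_cong[OF refl eq])
  have i2: "(\<integral>x. f x * (indicator E x * v x) \<partial>M) = (\<integral>x. f x * v x \<partial>M)"
    by (rule Bochner_Integration.integral_cong[OF refl eq])
  show ?thesis using cs i1 i2 unfolding L2_inner_def by simp
qed

lemma c_summable:
  assumes E[measurable]: "E \<in> sets M" and Ef: "emeasure M E < \<infinity>" and v: "\<And>k. v k \<in> L2 M"
    and bd: "\<And>x. x \<in> E \<Longrightarrow> summable (\<lambda>k. (v k x)^2) \<and> (\<Sum>k. (v k x)^2) \<le> B"
  shows "summable (\<lambda>k. \<integral>x. (indicator E x * v k x)^2 \<partial>M)"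
proof (rule summableI_nonneg_bounded[where x = "B * measure M E"])
  fix n
  show "0 \<le> (\<integral>x. (indicator E x * v n x)^2 \<partial>M)" by (rule integral_nonneg_AE) simp
  have "(\<Sum>i<n. \<integral>x. (indicator E x * v i x)^2 \<partial>M) = (\<integral>x. (\<Sum>i<n. (indicator E x * v i x)^2) \<partial>M)"
    by (rule Bochner_Integration.integral_sum[symmetric]) (use indv_sq_int[OF E v] in auto)
  also have "\<dots> \<le> (\<integral>x. B * indicator E x \<partial>M)"
  proof (rule integral_mono)
    show "integrable M (\<lambda>x. \<Sum>i<n. (indicator E x * v i x)^2)"
      using indv_sq_int[OF E v] by auto
    show "integrable M (\<lambda>x. B * indicator E x)" using Ef by simp
    fix x assume "x \<in> space M"
    show "(\<Sum>i<n. (indicator E x * v i x)^2) \<le> B * indicator E x"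
    proof (cases "x \<in> E")
      case True
      then have "(\<Sum>i<n. (v i x)^2) \<le> (\<Sum>i. (v i x)^2)"
        using bd by (intro sum_le_suminf) auto
      then show ?thesis using True bd[OF True] by simp
    qed simp
  qed
  also have "\<dots> = B * measure M E" using Ef by simp
  finally show "(\<Sum>i<n. \<integral>x. (indicator E x * v i x)^2 \<partial>M) \<le> B * measure M E" .
qed

lemma sqrt_le_sq: fixes I B :: real assumes "0 \<le> I" "sqrt I \<le> B" shows "I \<le> B^2"
proof -
  have "(sqrt I)^2 \<le> B^2" by (rule power_mono) (use assms in auto)
  then show ?thesis using assms by simp
qed



theorem lemma2p2:
  fixes \<mu> :: "'a measure" and E :: "'a set" and v :: "nat \<Rightarrow> 'a \<Rightarrow> real" and M :: real
  assumes "E \<in> sets \<mu>"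
    and "0 < emeasure \<mu> E" and "emeasure \<mu> E < \<infinity>"
    and "\<And>k. v k \<in> L2 \<mu>"
    and "\<And>x. x \<in> E \<Longrightarrow> summable (\<lambda>k. (v k x)\<^sup>2) \<and> (\<Sum>k. (v k x)\<^sup>2) \<le> M\<^sup>2"
  shows "compact_operator (L2_on \<mu> E) (L2_norm \<mu>) l2 l2_norm
           (\<lambda>f. (\<lambda>k. L2_inner \<mu> f (v k))) \<and>
         compact_operator l2 l2_norm (L2_on \<mu> E) (L2_norm \<mu>)
           (\<lambda>c. (\<lambda>x. indicator E x * (\<Sum>k. c k * v k x)))"
proof -
  note Em[measurable] = assms(1)
  note vL = assms(4) and bdv = assms(5)
  have vm[measurable]: "\<And>k. v k \<in> borel_measurable \<mu>" using vL by (auto simp: L2_def)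
  define c where "c k = (\<integral>x. (indicator E x * v k x)^2 \<partial>\<mu>)" for k
  have cs: "summable c" unfolding c_def by (rule c_summable[OF assms(1) assms(3) vL bdv])
  have c0: "0 \<le> c k" for k unfolding c_def by (rule integral_nonneg_AE) simp
  have Vb: "\<And>f k. f \<in> L2_on \<mu> E \<Longrightarrow> integrable \<mu> (\<lambda>x. f x * v k x) \<and>
      (L2_inner \<mu> f (v k))^2 \<le> (\<integral>x. (f x)^2 \<partial>\<mu>) * c k"
    unfolding c_def using V_bound[OF assms(1) _ vL] by blast
  have P1: "compact_operator (L2_on \<mu> E) (L2_norm \<mu>) l2 l2_norm (\<lambda>f. (\<lambda>k. L2_inner \<mu> f (v k)))"
    unfolding compact_operator_def
  proof (intro conjI ballI allI impI)
    fix f assume f: "f \<in> L2_on \<mu> E"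
    show "(\<lambda>k. L2_inner \<mu> f (v k)) \<in> l2" unfolding l2_def
      by (rule CollectI, rule summable_comparison_test[of _ "\<lambda>k. (\<integral>x. (f x)^2 \<partial>\<mu>) * c k"])
         (use Vb[OF f] summable_mult[OF cs] in auto)
  next
    fix f g a b assume f: "f \<in> L2_on \<mu> E" and g: "g \<in> L2_on \<mu> E"
    show "(\<lambda>k. L2_inner \<mu> (\<lambda>x. a * f x + b * g x) (v k)) =
          (\<lambda>k. a * L2_inner \<mu> f (v k) + b * L2_inner \<mu> g (v k))"
    proof
      fix k
      have "(\<lambda>x. (a * f x + b * g x) * v k x) = (\<lambda>x. a * (f x * v k x) + b * (g x * v k x))"
        by (simp add: fun_eq_iff algebra_simps)
      then show "L2_inner \<mu> (\<lambda>x. a * f x + b * g x) (v k) = a * L2_inner \<mu> f (v k) + b * L2_inner \<mu> g (v k)"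
        unfolding L2_inner_def using Vb[OF f, of k] Vb[OF g, of k] by simp
    qed
  next
    fix s :: "nat \<Rightarrow> 'a \<Rightarrow> real" and B :: real
    assume sB: "\<forall>n. s n \<in> L2_on \<mu> E \<and> L2_norm \<mu> (s n) \<le> B"
    have I: "(\<integral>x. (s n x)^2 \<partial>\<mu>) \<le> B^2" for n
      by (rule sqrt_le_sq) (use sB in \<open>auto simp: L2_norm_def intro: integral_nonneg_AE\<close>)
    have "(L2_inner \<mu> (s n) (v k))^2 \<le> B^2 * c k" for n k
      using Vb[of "s n" k] sB mult_right_mono[OF I c0] by (meson order_trans)
    from hilbert_cube[where a = "\<lambda>n k. L2_inner \<mu> (s n) (v k)" and C = "B^2", OF cs c0 this] obtain r h where rh: "strict_mono r" "summable (\<lambda>k. (h k)^2)"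
      "(\<lambda>n. sqrt (\<Sum>k. (L2_inner \<mu> (s (r n)) (v k) - h k)^2)) \<longlonglongrightarrow> 0"
      by (elim exE conjE)
    show "\<exists>r h. strict_mono r \<and> h \<in> l2 \<and>
        (\<lambda>n. l2_norm (\<lambda>y. L2_inner \<mu> (s (r n)) (v y) - h y)) \<longlonglongrightarrow> 0"
      by (rule exI[of _ r], rule exI[of _ h]) (simp add: l2_def l2_norm_def rh)
  qed
  have pw: "summable (\<lambda>k. cc k * v k x) \<and> (\<Sum>k. cc k * v k x)^2 \<le> (\<Sum>k. (cc k)^2) * M^2"
    if x: "x \<in> E" and cc: "cc \<in> l2" for x cc
  proof -
    have ccs: "summable (\<lambda>k. (cc k)^2)" using cc by (simp add: l2_def)
    from cs_suminf[OF ccs, of "\<lambda>k. v k x"] bdv[OF x]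
    have 1: "summable (\<lambda>k. cc k * v k x)" "(\<Sum>k. cc k * v k x)^2 \<le> (\<Sum>k. (cc k)^2) * (\<Sum>k. (v k x)^2)"
      by auto
    have "(\<Sum>k. (cc k)^2) * (\<Sum>k. (v k x)^2) \<le> (\<Sum>k. (cc k)^2) * M^2"
      by (rule mult_left_mono) (use bdv[OF x] ccs in \<open>auto intro: suminf_nonneg\<close>)
    with 1 show ?thesis by linarith
  qed
  define T where "T = (\<lambda>(cc::nat \<Rightarrow> real) x. indicator E x * (\<Sum>k. cc k * v k x))"
  have Tmem: "T cc \<in> L2_on \<mu> E" if cc: "cc \<in> l2" for cc
  proof -
    have Tm: "T cc \<in> borel_measurable \<mu>" unfolding T_def by measurable
    have "integrable \<mu> (\<lambda>x. (T cc x)^2)"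
    proof (rule Bochner_Integration.integrable_bound)
      show "integrable \<mu> (\<lambda>x. ((\<Sum>k. (cc k)^2) * M^2) * indicator E x)"
        using assms(3) by simp
      show "(\<lambda>x. (T cc x)^2) \<in> borel_measurable \<mu>" using Tm by measurable
      show "AE x in \<mu>. norm ((T cc x)^2) \<le> norm (((\<Sum>k. (cc k)^2) * M^2) * indicator E x)"
      proof (intro AE_I2)
        fix x show "norm ((T cc x)^2) \<le> norm (((\<Sum>k. (cc k)^2) * M^2) * indicator E x)"
        proof (cases "x \<in> E")
          case True
          have "0 \<le> (\<Sum>k. (cc k)^2) * M^2"
            using cc by (auto simp: l2_def intro!: suminf_nonneg mult_nonneg_nonneg)
          then show ?thesis using True pw[OF True cc] by (simp add: T_def)
        qed (simp add: T_def)
      qed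
    qed
    then show ?thesis using Tm unfolding L2_on_def L2_def by (auto simp: T_def)
  qed
  have Tlin: "T (\<lambda>k. a * cc k + b * dd k) = (\<lambda>x. a * T cc x + b * T dd x)"
    if cc: "cc \<in> l2" and dd: "dd \<in> l2" for cc dd a b
  proof
    fix x show "T (\<lambda>k. a * cc k + b * dd k) x = a * T cc x + b * T dd x"
    proof (cases "x \<in> E")
      case True
      have s1: "summable (\<lambda>k. cc k * v k x)" and s2: "summable (\<lambda>k. dd k * v k x)"
        using pw[OF True cc] pw[OF True dd] by auto
      have "(\<Sum>k. (a * cc k + b * dd k) * v k x) = (\<Sum>k. a * (cc k * v k x) + b * (dd k * v k x))"
        by (simp add: algebra_simps)
      also have "\<dots> = a * (\<Sum>k. cc k * v k x) + b * (\<Sum>k. dd k * v k x)"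
        using s1 s2 by (simp add: suminf_add[symmetric] suminf_mult summable_mult)
      finally show ?thesis using True by (simp add: T_def)
    qed (simp add: T_def)
  qed
  have P2: "compact_operator l2 l2_norm (L2_on \<mu> E) (L2_norm \<mu>) T"
    unfolding compact_operator_def
  proof (intro conjI ballI allI impI)
    fix f assume "f \<in> l2" then show "T f \<in> L2_on \<mu> E" by (rule Tmem)
  next
    fix f g a b assume "f \<in> l2" "g \<in> l2"
    then show "T (\<lambda>x. a * f x + b * g x) = (\<lambda>y. a * T f y + b * T g y)" by (rule Tlin)
  next
    fix s :: "nat \<Rightarrow> nat \<Rightarrow> real" and B :: real
    assume sB: "\<forall>n. s n \<in> l2 \<and> l2_norm (s n) \<le> B"
    have ss: "summable (\<lambda>k. (s n k)^2)" for n using sB by (simp add: l2_def)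
    have sI: "(\<Sum>k. (s n k)^2) \<le> B^2" for n
      by (rule sqrt_le_sq) (use sB ss in \<open>auto simp: l2_norm_def intro: suminf_nonneg\<close>)
    have "0 \<le> l2_norm (s 0)" using ss[of 0] by (simp add: l2_norm_def suminf_nonneg)
    then have B0: "0 \<le> B" using sB by (meson order_trans)
    have sk: "\<bar>s n k\<bar> \<le> B" for n k
    proof -
      have "(s n k)^2 \<le> (\<Sum>k. (s n k)^2)"
        using sum_le_suminf[OF ss[of n], of "{k}"] by simp
      then have "(s n k)^2 \<le> B^2" using sI[of n] by linarith
      then show ?thesis using B0 power2_le_imp_le[of "\<bar>s n k\<bar>" B] by simp
    qed
    from diag_subseq[where a = s and b = "\<lambda>k. B", OF sk] obtain r d
      where r: "strict_mono r" and d: "\<And>k. (\<lambda>n. s (r n) k) \<longlonglongrightarrow> d k" by (elim exE conjE) blast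
    have dpart: "(\<Sum>k<N. (d k)^2) \<le> B^2" for N
    proof -
      have L: "(\<lambda>n. \<Sum>k<N. (s (r n) k)^2) \<longlonglongrightarrow> (\<Sum>k<N. (d k)^2)"
        by (intro tendsto_sum tendsto_power d)
      have U: "(\<Sum>k<N. (s (r n) k)^2) \<le> B^2" for n
        using sum_le_suminf[OF ss[of "r n"], of "{..<N}"] sI[of "r n"] by simp
      show ?thesis by (rule LIMSEQ_le_const2[OF L]) (use U in auto)
    qed
    have ds: "summable (\<lambda>k. (d k)^2)" by (rule summableI_nonneg_bounded[OF _ dpart]) simp
    have dI: "(\<Sum>k. (d k)^2) \<le> B^2" by (rule suminf_le_const[OF ds dpart])
    have dl2: "d \<in> l2" using ds by (simp add: l2_def)
    define e where "e n k = s (r n) k - d k" for n k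
    have ebd: "(e n k)^2 \<le> 2 * (s (r n) k)^2 + 2 * (d k)^2" for n k
      using zero_le_power2[of "s (r n) k + d k"] unfolding e_def by (simp add: power2_eq_square algebra_simps)
    have s2: "summable (\<lambda>k. 2 * (s (r n) k)^2 + 2 * (d k)^2)" for n
      using ss[of "r n"] ds by (intro summable_add summable_mult)
    have es: "summable (\<lambda>k. (e n k)^2)" for n
      by (rule summable_comparison_test[OF _ s2[of n]]) (use ebd in auto)
    have eD: "(\<Sum>k. (e n k)^2) \<le> 4 * B^2" for n
    proof -
      have "(\<Sum>k. (e n k)^2) \<le> (\<Sum>k. 2 * (s (r n) k)^2 + 2 * (d k)^2)"
        by (rule suminf_le[OF ebd es s2])
      also have "\<dots> = 2 * (\<Sum>k. (s (r n) k)^2) + 2 * (\<Sum>k. (d k)^2)"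
        using ss[of "r n"] ds by (simp add: suminf_add[symmetric] suminf_mult summable_mult)
      also have "\<dots> \<le> 4 * B^2" using sI[of "r n"] dI by simp
      finally show ?thesis .
    qed
    have el: "(\<lambda>n. e n k) \<longlonglongrightarrow> 0" for k
      unfolding e_def using tendsto_diff[OF d[of k] tendsto_const[of "d k"]] by simp
    have sl2: "s n \<in> l2" for n using sB by simp
    have el2: "e n \<in> l2" for n using es by (simp add: l2_def)
    have Tdiff: "(\<lambda>y. T (s (r n)) y - T d y) = T (e n)" for n
    proof
      fix x show "T (s (r n)) x - T d x = T (e n) x"
      proof (cases "x \<in> E")
        case True
        have s1: "summable (\<lambda>k. s (r n) k * v k x)" and s2: "summable (\<lambda>k. d k * v k x)"
          using pw[OF True sl2] pw[OF True dl2] by auto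
        have "(\<Sum>k. s (r n) k * v k x) - (\<Sum>k. d k * v k x) = (\<Sum>k. s (r n) k * v k x - d k * v k x)"
          using s1 s2 by (simp add: suminf_diff)
        also have "\<dots> = (\<Sum>k. e n k * v k x)" by (simp add: e_def algebra_simps)
        finally show ?thesis using True by (simp add: T_def)
      qed (simp add: T_def)
    qed
    have lim: "(\<lambda>n. \<integral>x. (T (e n) x)^2 \<partial>\<mu>) \<longlonglongrightarrow> (\<integral>x. 0 \<partial>\<mu>)"
    proof (rule integral_dominated_convergence[where w = "\<lambda>x. (4 * B^2 * M^2) * indicator E x"])
      show "(\<lambda>x. 0::real) \<in> borel_measurable \<mu>" by simp
      show "(\<lambda>x. (T (e n) x)^2) \<in> borel_measurable \<mu>" for n unfolding T_def by measurable
      show "integrable \<mu> (\<lambda>x. (4 * B^2 * M^2) * indicator E x)" using assms(3) by simp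
      show "AE x in \<mu>. (\<lambda>n. (T (e n) x)^2) \<longlonglongrightarrow> 0"
      proof (intro AE_I2)
        fix x show "(\<lambda>n. (T (e n) x)^2) \<longlonglongrightarrow> 0"
        proof (cases "x \<in> E")
          case True
          have vs: "summable (\<lambda>k. (v k x)^2)" using bdv[OF True] by simp
          have "(\<lambda>n. \<Sum>k. e n k * v k x) \<longlonglongrightarrow> 0"
            by (rule weak_zero[OF es eD el vs])
          then have "(\<lambda>n. (\<Sum>k. e n k * v k x)^2) \<longlonglongrightarrow> 0^2" by (rule tendsto_power)
          then show ?thesis using True by (simp add: T_def)
        qed (simp add: T_def)
      qed
      show "AE x in \<mu>. norm ((T (e n) x)^2) \<le> (4 * B^2 * M^2) * indicator E x" for n
      proof (intro AE_I2)
        fix x show "norm ((T (e n) x)^2) \<le> (4 * B^2 * M^2) * indicator E x"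
        proof (cases "x \<in> E")
          case True
          have "(\<Sum>k. e n k * v k x)^2 \<le> (\<Sum>k. (e n k)^2) * M^2" using pw[OF True el2] by simp
          also have "\<dots> \<le> (4 * B^2) * M^2" by (rule mult_right_mono[OF eD]) simp
          finally show ?thesis using True by (simp add: T_def)
        qed (simp add: T_def)
      qed
    qed
    have "(\<lambda>n. L2_norm \<mu> (\<lambda>y. T (s (r n)) y - T d y)) \<longlonglongrightarrow> sqrt 0"
      unfolding Tdiff L2_norm_def by (rule tendsto_real_sqrt) (use lim in simp)
    then show "\<exists>r h. strict_mono r \<and> h \<in> L2_on \<mu> E \<and>
        (\<lambda>n. L2_norm \<mu> (\<lambda>y. T (s (r n)) y - h y)) \<longlonglongrightarrow> 0"
      using r Tmem[OF dl2] by auto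
  qed
  show ?thesis using P1 P2 unfolding T_def by simp
qed

end
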